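(* Let $\Gamma$ and $\Gamma'$ be connected strongly regular graphs with the same parameters $(n,k,a,c)$, with vertex sets $X$, $X'$, and let $x\in X$, $x'\in X'$. Let $i\in\{1,2\}$. Let $v\in E^*_i(x)V$ be an eigenvector of $E^*_i(x)AE^*_i(x)$ with eigenvalue $\lambda$ such that $\langle \mathbf{1},v\rangle=0$, and let $v'\in E'^*_i(x')V'$ be an eigenvector of $E'^*_i(x')A'E'^*_i(x')$ with eigenvalue $\lambda'$ such that $\langle \mathbf{1},v'\rangle=0$. Then $\lambda=\lambda'$ if and only if there exists a $\mathbb{C}$-linear bijection $\rho:T(x)v\to T'(x')v'$ with $\rho Aw=A'\rho w$ and $\rho E^*_j(x)w=E'^*_j(x')\rho w$ for all $w\in T(x)v$ and all $j$.
   Context: A strongly regular graph with parameters $(n,k,a,c)$ is a $k$-regular graph on $n$ vertices in which every pair of adjacent vertices has exactly $a$ common neighbours and every pair of distinct non-adjacent vertices has exactly $c$ common neighbours. For $\Gamma$ with vertex set $X$, distance $\partial$ and diameter $D$, let $A$ be its adjacency matrix, $V=\mathbb{C}^X$ with the standard Hermitian inner product $\langle u,w\rangle=u^t\overline{w}$, $\mathbf{1}$ the all-ones vector, and $E^*_j(x)$ ($0\le j\le D$) the diagonal matrix with $(E^*_j(x))_{yy}=1$ if $\partial(x,y)=j$ and $0$ otherwise. The Terwilliger algebra $T(x)$ is the subalgebra of $\mathrm{Mat}_X(\mathbb{C})$ generated by $A,E^*_0(x),\dots,E^*_D(x)$, and $T(x)v=\{Bv:B\in T(x)\}$. The same notation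 with primes is used for $\Gamma'$. *)

theory Defs
  imports "HOL-Analysis.Analysis"
begin

definition simple_graph :: "('n::finite \<Rightarrow> 'n \<Rightarrow> bool) \<Rightarrow> bool" where
  "simple_graph adj \<longleftrightarrow> (\<forall>x y. adj x y \<longleftrightarrow> adj y x) \<and> (\<forall>x. \<not> adj x x)"

definition connected_graph :: "('n::finite \<Rightarrow> 'n \<Rightarrow> bool) \<Rightarrow> bool" where
  "connected_graph adj \<longleftrightarrow> (\<forall>x y. adj\<^sup>*\<^sup>* x y)"

definition strongly_regular ::
  "('n::finite \<Rightarrow> 'n \<Rightarrow> bool) \<Rightarrow> nat \<Rightarrow> nat \<Rightarrow> nat \<Rightarrow> nat \<Rightarrow> bool" where
  "strongly_regular adj n k a c \<longleftrightarrow>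
     simple_graph adj \<and> CARD('n) = n \<and>
     (\<forall>x. card {y. adj x y} = k) \<and>
     (\<forall>x y. adj x y \<longrightarrow> card {z. adj x z \<and> adj y z} = a) \<and>
     (\<forall>x y. x \<noteq> y \<and> \<not> adj x y \<longrightarrow> card {z. adj x z \<and> adj y z} = c)"

definition graph_dist :: "('n::finite \<Rightarrow> 'n \<Rightarrow> bool) \<Rightarrow> 'n \<Rightarrow> 'n \<Rightarrow> nat" where
  "graph_dist adj x y = (LEAST m. (adj ^^ m) x y)"

definition diameter :: "('n::finite \<Rightarrow> 'n \<Rightarrow> bool) \<Rightarrow> nat" where
  "diameter adj = Max {graph_dist adj x y | x y. True}"

definition adj_matrix :: "('n::finite \<Rightarrow> 'n \<Rightarrow> bool) \<Rightarrow> complex^'n^'n" where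
  "adj_matrix adj = (\<chi> y z. if adj y z then 1 else 0)"

definition dual_idem :: "('n::finite \<Rightarrow> 'n \<Rightarrow> bool) \<Rightarrow> 'n \<Rightarrow> nat \<Rightarrow> complex^'n^'n" where
  "dual_idem adj x j = (\<chi> y z. if y = z \<and> graph_dist adj x y = j then 1 else 0)"

inductive_set terwilliger :: "('n::finite \<Rightarrow> 'n \<Rightarrow> bool) \<Rightarrow> 'n \<Rightarrow> (complex^'n^'n) set"
  for adj x where
  gen_A: "adj_matrix adj \<in> terwilliger adj x"
| gen_E: "j \<le> diameter adj \<Longrightarrow> dual_idem adj x j \<in> terwilliger adj x"
| one: "mat 1 \<in> terwilliger adj x"
| add: "B \<in> terwilliger adj x \<Longrightarrow> C \<in> terwilliger adj x \<Longrightarrow> B + C \<in> terwilliger adj x"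
| smult: "B \<in> terwilliger adj x \<Longrightarrow> (\<chi> i j. s * B $ i $ j) \<in> terwilliger adj x"
| mult: "B \<in> terwilliger adj x \<Longrightarrow> C \<in> terwilliger adj x \<Longrightarrow> B ** C \<in> terwilliger adj x"

definition T_module :: "('n::finite \<Rightarrow> 'n \<Rightarrow> bool) \<Rightarrow> 'n \<Rightarrow> complex^'n \<Rightarrow> (complex^'n) set" where
  "T_module adj x v = {B *v v | B. B \<in> terwilliger adj x}"

definition herm_inner :: "complex^'n::finite \<Rightarrow> complex^'n \<Rightarrow> complex" where
  "herm_inner u w = (\<Sum>y\<in>UNIV. u $ y * cnj (w $ y))"

end

theory Submission
  imports Defs
begin

lemma relpow2: "(adj ^^ 2) x y \<longleftrightarrow> (\<exists>z. adj x z \<and> adj z y)"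
  by (auto simp: numeral_2_eq_2 relcompp_apply)

lemma common_nb:
  fixes adj :: "'n::finite \<Rightarrow> 'n \<Rightarrow> bool"
  assumes srg: "strongly_regular adj n k a c" and conn: "connected_graph adj"
    and "y \<noteq> x" "\<not> adj x y"
  shows "\<exists>z. adj x z \<and> adj z y"
proof (cases "c = 0")
  case False
  have sg: "simple_graph adj" using srg by (simp add: strongly_regular_def)
  have "card {z. adj x z \<and> adj y z} = c" using srg assms(3,4) by (auto simp: strongly_regular_def)
  with False have "{z. adj x z \<and> adj y z} \<noteq> {}" by (metis card.empty)
  then show ?thesis using sg by (auto simp: simple_graph_def)
next
  case True
  have sg: "simple_graph adj" using srg by (simp add: strongly_regular_def)
  have cl: "\<And>u. adj\<^sup>*\<^sup>* x u \<Longrightarrow> u = x \<or> adj x u"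
  proof -
    fix u assume "adj\<^sup>*\<^sup>* x u"
    then show "u = x \<or> adj x u"
    proof (induction rule: rtranclp_induct)
      case base then show ?case by simp
    next
      case (step p q)
      show ?case
      proof (rule ccontr)
        assume nq: "\<not> (q = x \<or> adj x q)"
        have "adj x p" using step nq by auto
        moreover have "adj q p" using step(2) sg by (auto simp: simple_graph_def)
        ultimately have "p \<in> {z. adj x z \<and> adj q z}" by simp
        hence "card {z. adj x z \<and> adj q z} \<noteq> 0" by (metis card_0_eq empty_iff finite)
        moreover have "card {z. adj x z \<and> adj q z} = c" using srg nq by (auto simp: strongly_regular_def)
        ultimately show False using True by simp
      qed
    qed
  qed
  have "adj\<^sup>*\<^sup>* x y" using conn by (simp add: connected_graph_def)
  then show ?thesis using cl assms by blast
qed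

lemma dist_eq:
  fixes adj :: "'n::finite \<Rightarrow> 'n \<Rightarrow> bool"
  assumes srg: "strongly_regular adj n k a c" and conn: "connected_graph adj"
  shows "graph_dist adj x y = (if y = x then 0 else if adj x y then 1 else 2)"
proof -
  have sg: "simple_graph adj" using srg by (simp add: strongly_regular_def)
  show ?thesis
  proof (cases "y = x")
    case True then show ?thesis by (simp add: graph_dist_def)
  next
    case ne: False
    show ?thesis
    proof (cases "adj x y")
      case True
      have "(LEAST m. (adj ^^ m) x y) = 1"
        by (rule Least_equality) (use True ne in \<open>auto simp: less_Suc_eq_le[symmetric] intro: ccontr\<close>)
      then show ?thesis using True ne by (simp add: graph_dist_def)
    next
      case False
      obtain z where "adj x z" "adj z y" using common_nb[OF srg conn ne False] by blast
      have "(LEAST m. (adj ^^ m) x y) = 2"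
      proof (rule Least_equality)
        show "(adj ^^ 2) x y" using relpow2 \<open>adj x z\<close> \<open>adj z y\<close> by metis
      next
        fix m assume "(adj ^^ m) x y"
        then show "2 \<le> m" using ne False
          by (cases m; cases "m - 1"; auto)
      qed
      then show ?thesis using False ne by (simp add: graph_dist_def)
    qed
  qed
qed


lemma A_apply: "(adj_matrix adj *v u) $ y = (\<Sum>z\<in>UNIV. if adj y z then u$z else 0)"
  by (auto simp: adj_matrix_def matrix_vector_mult_def intro!: sum.cong)

lemma E_apply: "(dual_idem adj x j *v u) $ y = (if graph_dist adj x y = j then u$y else 0)"
proof -
  have "(dual_idem adj x j *v u) $ y = (\<Sum>z\<in>UNIV. if z = y then (if graph_dist adj x y = j then u$y else 0) else 0)"
    unfolding dual_idem_def matrix_vector_mult_def by (rule trans[OF vec_lambda_beta], rule sum.cong) auto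
  also have "\<dots> = (if graph_dist adj x y = j then u$y else 0)" by simp
  finally show ?thesis .
qed

lemma A_sq:
  fixes adj :: "'n::finite \<Rightarrow> 'n \<Rightarrow> bool"
  assumes srg: "strongly_regular adj n k a c"
  shows "adj_matrix adj *v (adj_matrix adj *v u) = (of_nat k - of_nat c) *s u
     + (of_nat a - of_nat c) *s (adj_matrix adj *v u) + (of_nat c * (\<Sum>t\<in>UNIV. u$t)) *s (\<chi> y. 1)"
proof -
  have sg: "simple_graph adj" using srg by (simp add: strongly_regular_def)
  show ?thesis
  proof (subst vec_eq_iff, intro allI)
    fix y
    have cardv: "card {z. adj y z \<and> adj t z} = (if t = y then k else if adj y t then a else c)" for t
      using srg unfolding strongly_regular_def by (cases "t = y"; cases "adj y t") auto
    have "(adj_matrix adj *v (adj_matrix adj *v u)) $ y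
        = (\<Sum>z\<in>UNIV. \<Sum>t\<in>UNIV. if adj y z \<and> adj z t then u$t else 0)"
      by (simp add: A_apply sum_distrib_left) (auto intro!: sum.cong simp: A_apply)
    also have "\<dots> = (\<Sum>t\<in>UNIV. \<Sum>z\<in>UNIV. if adj y z \<and> adj z t then u$t else 0)"
      by (rule sum.swap)
    also have "\<dots> = (\<Sum>t\<in>UNIV. of_nat (card {z. adj y z \<and> adj t z}) * u$t)"
    proof (rule sum.cong[OF refl])
      fix t
      have "(\<Sum>z\<in>UNIV. if adj y z \<and> adj z t then u$t else 0) = (\<Sum>z\<in>{z. adj y z \<and> adj t z}. u$t)"
        using sg by (simp add: sum.If_cases simple_graph_def)
      then show "(\<Sum>z\<in>UNIV. if adj y z \<and> adj z t then u$t else 0) = of_nat (card {z. adj y z \<and> adj t z}) * u$t"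
        by simp
    qed
    also have "\<dots> = (\<Sum>t\<in>UNIV. ((of_nat k - of_nat c) * (if t = y then 1 else 0)
         + (of_nat a - of_nat c) * (if adj y t then 1 else 0) + of_nat c) * u$t)"
    proof (intro sum.cong refl)
      fix t
      have nl: "\<not> adj y y" using sg by (simp add: simple_graph_def)
      show "of_nat (card {z. adj y z \<and> adj t z}) * u$t = ((of_nat k - of_nat c) * (if t = y then 1 else 0)
         + (of_nat a - of_nat c) * (if adj y t then 1 else 0) + of_nat c) * u$t"
        unfolding cardv using nl by auto
    qed
    also have "\<dots> = (of_nat k - of_nat c) * u$y + (of_nat a - of_nat c) * (\<Sum>t\<in>UNIV. if adj y t then u$t else 0)
        + of_nat c * (\<Sum>t\<in>UNIV. u$t)"
    proof -
      have "(\<Sum>t\<in>UNIV. ((of_nat k - of_nat c) * (if t = y then 1 else 0)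
         + (of_nat a - of_nat c) * (if adj y t then 1 else 0) + of_nat c) * u$t)
        = (\<Sum>t\<in>UNIV. (of_nat k - of_nat c) * (if t = y then u$t else 0)) +
          (\<Sum>t\<in>UNIV. (of_nat a - of_nat c) * (if adj y t then u$t else 0)) +
          (\<Sum>t\<in>UNIV. of_nat c * u$t)"
        by (subst sum.distrib[symmetric])+ (rule sum.cong, auto simp: algebra_simps)
      then show ?thesis by (simp add: sum_distrib_left[symmetric])
    qed
    finally show "(adj_matrix adj *v (adj_matrix adj *v u)) $ y = ((of_nat k - of_nat c) *s u
     + (of_nat a - of_nat c) *s (adj_matrix adj *v u) + (of_nat c * (\<Sum>t\<in>UNIV. u$t)) *s (\<chi> y. 1)) $ y"
      by (simp only: vector_add_component vector_smult_component A_apply[of adj u y] vec_lambda_beta mult_1_right)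
  qed
qed

lemma selfadj:
  assumes sg: "simple_graph adj"
  shows "herm_inner (adj_matrix adj *v u) z = herm_inner u (adj_matrix adj *v z)"
proof -
  have "herm_inner (adj_matrix adj *v u) z = (\<Sum>y\<in>UNIV. \<Sum>t\<in>UNIV. if adj y t then u$t * cnj (z$y) else 0)"
    by (simp add: herm_inner_def A_apply sum_distrib_right) (auto intro!: sum.cong)
  also have "\<dots> = (\<Sum>t\<in>UNIV. \<Sum>y\<in>UNIV. if adj y t then u$t * cnj (z$y) else 0)"
    by (rule sum.swap)
  also have "\<dots> = herm_inner u (adj_matrix adj *v z)"
    using sg by (simp add: herm_inner_def A_apply sum_distrib_left) (auto intro!: sum.cong simp: simple_graph_def)
  finally show ?thesis .
qed

lemma herm_self_zero: "herm_inner u u = 0 \<Longrightarrow> u = 0"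
proof -
  assume h: "herm_inner u u = 0"
  have hh: "herm_inner u u = of_real (\<Sum>y\<in>UNIV. (cmod (u$y))^2)"
    unfolding herm_inner_def of_real_sum by (rule sum.cong) (auto simp only: complex_norm_square)
  have "(\<Sum>y\<in>UNIV. (cmod (u$y))^2) = 0" by (metis h hh of_real_eq_0_iff)
  then have "\<forall>y\<in>UNIV. (cmod (u$y))^2 = 0" by (subst (asm) sum_nonneg_eq_0_iff) auto
  then show "u = 0" by (simp add: vec_eq_iff)
qed

lemma herm_add: "herm_inner (u + w) z = herm_inner u z + herm_inner w z"
  by (simp add: herm_inner_def algebra_simps sum.distrib)
lemma herm_smult: "herm_inner (s *s u) z = s * herm_inner u z"
  by (simp add: herm_inner_def algebra_simps sum_distrib_left)
lemma herm_smult2: "herm_inner u (s *s z) = cnj s * herm_inner u z"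
  by (simp add: herm_inner_def algebra_simps sum_distrib_left)
lemma herm_sub: "herm_inner (u - w) z = herm_inner u z - herm_inner w z"
  by (simp add: herm_inner_def algebra_simps sum_subtractf)
lemma herm_sub2: "herm_inner z (u - w) = herm_inner z u - herm_inner z w"
  by (simp add: herm_inner_def algebra_simps sum_subtractf)
lemma herm_zero[simp]: "herm_inner 0 z = 0" "herm_inner z 0 = 0"
  by (simp_all add: herm_inner_def)


lemma mv_smult: "M *v (s *s u) = s *s (M *v (u::complex^'n::finite))"
  by (simp add: vec_eq_iff matrix_vector_mult_def sum_distrib_left algebra_simps)

lemma smult_mv: "(\<chi> i j. s * B $ i $ j) *v u = s *s (B *v (u::complex^'n::finite))"
  by (simp add: vec_eq_iff matrix_vector_mult_def sum_distrib_left algebra_simps)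

lemma mv_lin: "M *v (\<alpha> *s p + \<beta> *s q) = \<alpha> *s (M *v p) + \<beta> *s (M *v (q::complex^'n::finite))"
  by (simp add: matrix_vector_right_distrib mv_smult)

locale side =
  fixes adj :: "'n::finite \<Rightarrow> 'n \<Rightarrow> bool" and n k a c :: nat and x :: 'n and i :: nat
    and v :: "complex^'n" and mu :: complex
  assumes srg: "strongly_regular adj n k a c" and conn: "connected_graph adj"
    and i: "i \<in> {1, 2}"
    and v_in: "dual_idem adj x i *v v = v"
    and v_eig: "(dual_idem adj x i ** adj_matrix adj ** dual_idem adj x i) *v v = mu *s v"
    and v_orth: "herm_inner (\<chi> y. 1) v = 0"
begin

definition "w = adj_matrix adj *v v - mu *s v"
definition "f = of_nat k - of_nat c + (of_nat a - of_nat c) * mu - mu^2"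

abbreviation "A \<equiv> adj_matrix adj"
abbreviation "D y \<equiv> graph_dist adj x y"

lemma sg: "simple_graph adj" using srg by (simp add: strongly_regular_def)

lemma D: "D y = (if y = x then 0 else if adj x y then 1 else 2)"
  using dist_eq[OF srg conn] .

lemma sumv: "(\<Sum>t\<in>UNIV. v$t) = 0"
proof -
  have "(\<Sum>t\<in>UNIV. cnj (v$t)) = 0" using v_orth by (simp add: herm_inner_def)
  then show ?thesis by (metis complex_cnj_zero_iff cnj_sum)
qed

lemma vsupp: "D y \<noteq> i \<Longrightarrow> v$y = 0"
  using arg_cong[OF v_in, of "\<lambda>u. u$y"] by (simp add: E_apply)

lemma Av_i: "D y = i \<Longrightarrow> (A *v v)$y = mu * v$y"
proof -
  assume "D y = i"
  have "((dual_idem adj x i ** A ** dual_idem adj x i) *v v)$y = (mu *s v)$y" using v_eig by simp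
  then show ?thesis using \<open>D y = i\<close> v_in
    by (simp add: matrix_vector_mul_assoc[symmetric] E_apply)
qed

lemma Av_x: "(A *v v)$x = 0"
proof -
  have "(A *v v)$x = (\<Sum>z\<in>UNIV. if adj x z then v$z else 0)" by (simp add: A_apply)
  also have "\<dots> = (if i = 1 then (\<Sum>z\<in>UNIV. v$z) else 0)"
  proof (cases "i = 1")
    case True
    have "(\<Sum>z\<in>UNIV. if adj x z then v$z else 0) = (\<Sum>z\<in>UNIV. v$z)"
    proof (rule sum.cong[OF refl])
      fix z show "(if adj x z then v$z else 0) = v$z"
        using vsupp[of z] True sg by (auto simp: D simple_graph_def)
    qed
    then show ?thesis using True by simp
  next
    case False
    then have "i = 2" using i by auto
    have "(\<Sum>z\<in>UNIV. if adj x z then v$z else 0) = 0"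
    proof (intro sum.neutral ballI)
      fix z show "(if adj x z then v$z else 0) = 0"
        using vsupp[of z] \<open>i = 2\<close> sg by (auto simp: D simple_graph_def)
    qed
    then show ?thesis using False by simp
  qed
  also have "\<dots> = 0" using sumv by simp
  finally show ?thesis .
qed

lemma wP: "w = dual_idem adj x (3 - i) *v (A *v v)"
proof (subst vec_eq_iff, intro allI)
  fix y
  have Dy: "D y = 0 \<or> D y = i \<or> D y = 3 - i" using i by (auto simp: D)
  have i3: "i \<noteq> 3 - i" using i by auto
  show "w $ y = (dual_idem adj x (3 - i) *v (A *v v)) $ y"
  proof (cases "D y = i")
    case True then show ?thesis using i3 by (simp add: w_def E_apply Av_i)
  next
    case False
    then have v0: "v$y = 0" by (rule vsupp)
    show ?thesis
    proof (cases "D y = 0")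
      case True
      then have "y = x" by (simp add: D split: if_splits)
      then show ?thesis using v0 True i by (auto simp: w_def E_apply Av_x)
    next
      case False
      then have "D y = 3 - i" using Dy \<open>D y \<noteq> i\<close> by auto
      then show ?thesis using v0 by (simp add: w_def E_apply)
    qed
  qed
qed

lemma Ev: "dual_idem adj x j *v v = (if j = i then v else 0)"
  using vsupp by (auto simp: vec_eq_iff E_apply)

lemma Ew: "dual_idem adj x j *v w = (if j = 3 - i then w else 0)"
  unfolding wP by (auto simp: vec_eq_iff E_apply)

lemma vw: "herm_inner v w = 0"
proof -
  have "herm_inner v w = 0"
    unfolding herm_inner_def
  proof (intro sum.neutral ballI)
    fix y
    have e: "(dual_idem adj x i *v w)$y = 0" using Ew[of i] i by auto
    have "v$y = 0 \<or> w$y = 0"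
    proof (cases "D y = i")
      case True then show ?thesis using e by (simp add: E_apply)
    next
      case False then show ?thesis using vsupp by simp
    qed
    then show "v $ y * cnj (w $ y) = 0" by auto
  qed
  then show ?thesis by simp
qed

lemma Av: "A *v v = mu *s v + w"
  by (simp add: w_def)

lemma Aw: "A *v w = f *s v + (of_nat a - of_nat c - mu) *s w"
proof -
  have "A *v w = A *v (A *v v) - mu *s (A *v v)"
    by (simp add: w_def matrix_vector_mult_diff_distrib mv_smult)
  also have "\<dots> = (of_nat k - of_nat c) *s v + (of_nat a - of_nat c) *s (mu *s v + w) - mu *s (mu *s v + w)"
    by (simp only: A_sq[OF srg] sumv) (simp add: Av)
  also have "\<dots> = f *s v + (of_nat a - of_nat c - mu) *s w"
    by (simp add: vec_eq_iff f_def algebra_simps power2_eq_square)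
  finally show ?thesis .
qed

lemma w0: "v \<noteq> 0 \<Longrightarrow> (w = 0 \<longleftrightarrow> f = 0)"
proof
  assume "v \<noteq> 0" "w = 0"
  then have "f *s v = 0" using Aw by simp
  then show "f = 0" using \<open>v \<noteq> 0\<close> by simp
next
  assume "f = 0"
  have "herm_inner w w = herm_inner (A *v v) w - mu * herm_inner v w"
    by (simp add: w_def herm_sub herm_smult)
  also have "\<dots> = herm_inner v (A *v w)" by (simp add: vw selfadj[OF sg])
  also have "\<dots> = cnj (of_nat a - of_nat c - mu) * herm_inner v w"
    by (simp only: Aw \<open>f = 0\<close> vector_smult_lzero add_0_left herm_smult2)
  also have "\<dots> = 0" by (simp add: vw)
  finally show "w = 0" by (rule herm_self_zero)
qed

definition "S = {\<alpha> *s v + \<beta> *s w | \<alpha> \<beta>. True}"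

lemma closed: "B \<in> terwilliger adj x \<Longrightarrow> u \<in> S \<Longrightarrow> B *v u \<in> S"
proof (induction arbitrary: u rule: terwilliger.induct)
  case gen_A
  then obtain \<alpha> \<beta> where u: "u = \<alpha> *s v + \<beta> *s w" by (auto simp: S_def)
  have "A *v u = (\<alpha> * mu + \<beta> * f) *s v + (\<alpha> + \<beta> * (of_nat a - of_nat c - mu)) *s w"
    unfolding u mv_lin Av Aw by (simp add: vec_eq_iff algebra_simps)
  then show ?case unfolding S_def by blast
next
  case (gen_E j)
  then obtain \<alpha> \<beta> where u: "u = \<alpha> *s v + \<beta> *s w" by (auto simp: S_def)
  have "dual_idem adj x j *v u = (if j = i then \<alpha> else 0) *s v + (if j = 3 - i then \<beta> else 0) *s w"
    unfolding u mv_lin Ev Ew by simp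
  then show ?case unfolding S_def by blast
next
  case one then show ?case by simp
next
  case (add B C)
  have "B *v u \<in> S" "C *v u \<in> S" using add by auto
  then obtain \<alpha> \<beta> \<alpha>' \<beta>' where "B *v u = \<alpha> *s v + \<beta> *s w" "C *v u = \<alpha>' *s v + \<beta>' *s w"
    unfolding S_def by blast
  then have "(B + C) *v u = (\<alpha> + \<alpha>') *s v + (\<beta> + \<beta>') *s w"
    by (simp add: matrix_vector_mult_add_rdistrib vec_eq_iff algebra_simps)
  then show ?case unfolding S_def by blast
next
  case (smult B s)
  have "B *v u \<in> S" using smult by auto
  then obtain \<alpha> \<beta> where "B *v u = \<alpha> *s v + \<beta> *s w" unfolding S_def by blast
  then have "(\<chi> i j. s * B $ i $ j) *v u = (s * \<alpha>) *s v + (s * \<beta>) *s w"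
    by (simp add: smult_mv vec_eq_iff algebra_simps)
  then show ?case unfolding S_def by blast
next
  case (mult B C)
  then show ?case by (simp add: matrix_vector_mul_assoc[symmetric])
qed

lemma T_eq: "T_module adj x v = S"
proof
  show "T_module adj x v \<subseteq> S"
  proof
    fix u assume "u \<in> T_module adj x v"
    then obtain B where "B \<in> terwilliger adj x" "u = B *v v" by (auto simp: T_module_def)
    moreover have "v \<in> S" unfolding S_def by (rule CollectI, rule exI[of _ 1], rule exI[of _ 0]) simp
    ultimately show "u \<in> S" using closed by simp
  qed
next
  show "S \<subseteq> T_module adj x v"
  proof
    fix u assume "u \<in> S"
    then obtain \<alpha> \<beta> where u: "u = \<alpha> *s v + \<beta> *s w" by (auto simp: S_def)
    define M where "M = (\<chi> i j. \<alpha> * mat 1 $ i $ j) + ((\<chi> i j. \<beta> * A $ i $ j) + (\<chi> i j. (- \<beta> * mu) * mat 1 $ i $ j))"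
    have "M \<in> terwilliger adj x" unfolding M_def
      by (intro terwilliger.add terwilliger.smult terwilliger.one terwilliger.gen_A)
    moreover have "M *v v = u"
      unfolding M_def u by (simp only: matrix_vector_mult_add_rdistrib smult_mv matrix_vector_mul_lid)
        (simp add: w_def vec_eq_iff algebra_simps)
    ultimately show "u \<in> T_module adj x v" unfolding T_module_def by blast
  qed
qed

end


lemma herm_swap: "herm_inner u z = cnj (herm_inner z u)"
  by (simp add: herm_inner_def mult.commute)

lemma herm_nz: "u \<noteq> 0 \<Longrightarrow> herm_inner u u \<noteq> 0"
  using herm_self_zero by blast

context side begin
lemma wv: "herm_inner w v = 0" by (subst herm_swap) (simp add: vw)

lemma coef: "herm_inner (\<alpha> *s v + \<beta> *s w) v = \<alpha> * herm_inner v v"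
  "herm_inner (\<alpha> *s v + \<beta> *s w) w = \<beta> * herm_inner w w"
  by (simp_all add: herm_add herm_smult vw wv)

lemma Au: "A *v (\<alpha> *s v + \<beta> *s w) = (\<alpha> * mu + \<beta> * f) *s v + (\<alpha> + \<beta> * (of_nat a - of_nat c - mu)) *s w"
  unfolding mv_lin Av Aw by (simp add: vec_eq_iff algebra_simps)

lemma Eu: "dual_idem adj x j *v (\<alpha> *s v + \<beta> *s w) = (if j = i then \<alpha> else 0) *s v + (if j = 3 - i then \<beta> else 0) *s w"
  unfolding mv_lin Ev Ew by simp

lemma i3: "i \<noteq> 3 - i" using i by auto

lemma vS: "v \<in> S" unfolding S_def by (rule CollectI, rule exI[of _ 1], rule exI[of _ 0]) simp
lemma zS: "0 \<in> S" unfolding S_def by (rule CollectI, rule exI[of _ 0], rule exI[of _ 0]) simp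
lemma AvS: "A *v v \<in> S" unfolding S_def Av by (rule CollectI, rule exI[of _ mu], rule exI[of _ 1]) simp
end


theorem lemma5p10:
  fixes adj :: "'n::finite \<Rightarrow> 'n \<Rightarrow> bool" and adj' :: "'m::finite \<Rightarrow> 'm \<Rightarrow> bool"
    and n k a c :: nat and x :: 'n and x' :: 'm and i :: nat
    and v :: "complex^'n" and v' :: "complex^'m" and mu mu' :: complex
  assumes srg: "strongly_regular adj n k a c" and srg': "strongly_regular adj' n k a c"
    and conn: "connected_graph adj" and conn': "connected_graph adj'"
    and i: "i \<in> {1, 2}"
    and v_in: "dual_idem adj x i *v v = v"
    and v_nz: "v \<noteq> 0"
    and v_eig: "(dual_idem adj x i ** adj_matrix adj ** dual_idem adj x i) *v v = mu *s v"
    and v_orth: "herm_inner (\<chi> y. 1) v = 0"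
    and v'_in: "dual_idem adj' x' i *v v' = v'"
    and v'_nz: "v' \<noteq> 0"
    and v'_eig: "(dual_idem adj' x' i ** adj_matrix adj' ** dual_idem adj' x' i) *v v' = mu' *s v'"
    and v'_orth: "herm_inner (\<chi> y. 1) v' = 0"
  shows "mu = mu' \<longleftrightarrow>
    (\<exists>\<rho> :: complex^'n \<Rightarrow> complex^'m.
       bij_betw \<rho> (T_module adj x v) (T_module adj' x' v') \<and>
       (\<forall>u\<in>T_module adj x v. \<forall>w\<in>T_module adj x v. \<forall>s::complex.
          \<rho> (u + w) = \<rho> u + \<rho> w \<and> \<rho> (s *s u) = s *s \<rho> u) \<and>
       (\<forall>w\<in>T_module adj x v.
          \<rho> (adj_matrix adj *v w) = adj_matrix adj' *v \<rho> w \<and>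
          (\<forall>j. \<rho> (dual_idem adj x j *v w) = dual_idem adj' x' j *v \<rho> w)))"
proof -
  interpret L: side adj n k a c x i v mu
    by (unfold_locales) (fact srg conn i v_in v_eig v_orth)+
  interpret R: side adj' n k a c x' i v' mu'
    by (unfold_locales) (fact srg' conn' i v'_in v'_eig v'_orth)+
  show ?thesis
    unfolding L.T_eq R.T_eq
  proof
    assume mm: "mu = mu'"
    have ff: "L.f = R.f" by (simp add: L.f_def R.f_def mm)
    have ww: "L.w = 0 \<longleftrightarrow> R.w = 0" using L.w0[OF v_nz] R.w0[OF v'_nz] ff by simp
    define \<rho> where "\<rho> u = (herm_inner u v / herm_inner v v) *s v' + (herm_inner u L.w / herm_inner L.w L.w) *s R.w" for u
    have vv: "herm_inner v v \<noteq> 0" using herm_nz[OF v_nz] .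
    have vv': "herm_inner v' v' \<noteq> 0" using herm_nz[OF v'_nz] .
    have key: "\<rho> (\<alpha> *s v + \<beta> *s L.w) = \<alpha> *s v' + \<beta> *s R.w" for \<alpha> \<beta>
    proof (cases "L.w = 0")
      case True
      then have "R.w = 0" using ww by simp
      then show ?thesis using True vv by (simp add: \<rho>_def L.coef herm_smult)
    next
      case False
      then have "herm_inner L.w L.w \<noteq> 0" by (rule herm_nz)
      then show ?thesis using vv by (simp add: \<rho>_def L.coef)
    qed
    have Sform: "u \<in> L.S \<Longrightarrow> \<exists>\<alpha> \<beta>. u = \<alpha> *s v + \<beta> *s L.w" for u unfolding L.S_def by blast
    have bij: "bij_betw \<rho> L.S R.S"
    proof (rule bij_betw_imageI)
      show "inj_on \<rho> L.S"
      proof (rule inj_onI)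
        fix u1 u2 assume "u1 \<in> L.S" "u2 \<in> L.S" and eq: "\<rho> u1 = \<rho> u2"
        then obtain \<alpha>1 \<beta>1 \<alpha>2 \<beta>2 where u1: "u1 = \<alpha>1 *s v + \<beta>1 *s L.w" and u2: "u2 = \<alpha>2 *s v + \<beta>2 *s L.w"
          using Sform by metis
        have e: "\<alpha>1 *s v' + \<beta>1 *s R.w = \<alpha>2 *s v' + \<beta>2 *s R.w" using eq by (simp add: u1 u2 key)
        have "\<alpha>1 * herm_inner v' v' = \<alpha>2 * herm_inner v' v'"
          using arg_cong[OF e, of "\<lambda>z. herm_inner z v'"] by (simp add: R.coef)
        then have a: "\<alpha>1 = \<alpha>2" using vv' by simp
        show "u1 = u2"
        proof (cases "R.w = 0")
          case True
          then have "L.w = 0" using ww by simp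
          then show ?thesis using a by (simp add: u1 u2)
        next
          case False
          have "\<beta>1 * herm_inner R.w R.w = \<beta>2 * herm_inner R.w R.w"
            using arg_cong[OF e, of "\<lambda>z. herm_inner z R.w"] by (simp add: R.coef)
          then have "\<beta>1 = \<beta>2" using herm_nz[OF False] by simp
          then show ?thesis using a by (simp add: u1 u2)
        qed
      qed
    next
      show "\<rho> ` L.S = R.S"
        unfolding L.S_def R.S_def
      proof (auto simp: key image_iff)
        fix \<alpha> \<beta>
        show "\<exists>\<alpha>' \<beta>'. \<alpha> *s v' + \<beta> *s R.w = \<alpha>' *s v' + \<beta>' *s R.w" by blast
        show "\<exists>z. (\<exists>\<alpha> \<beta>. z = \<alpha> *s v + \<beta> *s L.w) \<and> \<alpha> *s v' + \<beta> *s R.w = \<rho> z"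
          using key by metis
      qed
    qed
    show "\<exists>\<rho>. bij_betw \<rho> L.S R.S \<and>
       (\<forall>u\<in>L.S. \<forall>w\<in>L.S. \<forall>s::complex. \<rho> (u + w) = \<rho> u + \<rho> w \<and> \<rho> (s *s u) = s *s \<rho> u) \<and>
       (\<forall>w\<in>L.S. \<rho> (adj_matrix adj *v w) = adj_matrix adj' *v \<rho> w \<and>
          (\<forall>j. \<rho> (dual_idem adj x j *v w) = dual_idem adj' x' j *v \<rho> w))"
    proof (intro exI conjI ballI allI)
      show "bij_betw \<rho> L.S R.S" by (fact bij)
    next
      fix u z and s :: complex
      show "\<rho> (u + z) = \<rho> u + \<rho> z"
        by (simp add: \<rho>_def herm_add vec_eq_iff algebra_simps add_divide_distrib)
      show "\<rho> (s *s u) = s *s \<rho> u"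
        by (simp add: \<rho>_def herm_smult vec_eq_iff algebra_simps)
    next
      fix u assume "u \<in> L.S"
      then obtain \<alpha> \<beta> where u: "u = \<alpha> *s v + \<beta> *s L.w" using Sform by metis
      show "\<rho> (adj_matrix adj *v u) = adj_matrix adj' *v \<rho> u"
        unfolding u L.Au key R.Au by (simp add: mm ff)
    next
      fix u j assume "u \<in> L.S"
      then obtain \<alpha> \<beta> where u: "u = \<alpha> *s v + \<beta> *s L.w" using Sform by metis
      show "\<rho> (dual_idem adj x j *v u) = dual_idem adj' x' j *v \<rho> u"
        unfolding u L.Eu key R.Eu by simp
    qed
  next
    assume "\<exists>\<rho>. bij_betw \<rho> L.S R.S \<and>
       (\<forall>u\<in>L.S. \<forall>w\<in>L.S. \<forall>s::complex. \<rho> (u + w) = \<rho> u + \<rho> w \<and> \<rho> (s *s u) = s *s \<rho> u) \<and>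
       (\<forall>w\<in>L.S. \<rho> (adj_matrix adj *v w) = adj_matrix adj' *v \<rho> w \<and>
          (\<forall>j. \<rho> (dual_idem adj x j *v w) = dual_idem adj' x' j *v \<rho> w))"
    then obtain \<rho> where bij: "bij_betw \<rho> L.S R.S"
      and lin: "\<And>u s. u \<in> L.S \<Longrightarrow> \<rho> (s *s u) = s *s \<rho> u"
      and rA: "\<And>u. u \<in> L.S \<Longrightarrow> \<rho> (adj_matrix adj *v u) = adj_matrix adj' *v \<rho> u"
      and rE: "\<And>u j. u \<in> L.S \<Longrightarrow> \<rho> (dual_idem adj x j *v u) = dual_idem adj' x' j *v \<rho> u"
      by blast
    have r0: "\<rho> 0 = 0" using lin[OF L.vS, of 0] by simp
    have rv0: "\<rho> v \<noteq> 0"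
    proof
      assume "\<rho> v = 0"
      then have "\<rho> v = \<rho> 0" using r0 by simp
      then have "v = 0" using bij_betw_imp_inj_on[OF bij] L.vS L.zS by (auto dest: inj_onD)
      then show False using v_nz by simp
    qed
    have "\<rho> v \<in> R.S" using bij L.vS by (auto simp: bij_betw_def)
    then obtain \<alpha> \<beta> where rv: "\<rho> v = \<alpha> *s v' + \<beta> *s R.w" unfolding R.S_def by blast
    have "\<rho> v = \<rho> (dual_idem adj x i *v v)" using v_in by simp
    also have "\<dots> = dual_idem adj' x' i *v \<rho> v" by (rule rE[OF L.vS])
    also have "\<dots> = \<alpha> *s v'" unfolding rv R.Eu using R.i3 by simp
    finally have rv2: "\<rho> v = \<alpha> *s v'" .
    then have an: "\<alpha> \<noteq> 0" using rv0 by auto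
    have EAv: "dual_idem adj x i *v (adj_matrix adj *v v) = mu *s v"
      using L.Eu[of i mu 1] L.i3 by (simp add: L.Av add.commute)
    have "mu *s \<rho> v = \<rho> (dual_idem adj x i *v (adj_matrix adj *v v))"
      unfolding EAv using lin[OF L.vS] by simp
    also have "\<dots> = dual_idem adj' x' i *v (adj_matrix adj' *v \<rho> v)"
      using rE[OF L.AvS] rA[OF L.vS] by simp
    also have "\<dots> = (\<alpha> * mu') *s v'"
      unfolding rv2 using R.Eu[of i "\<alpha> * mu'" \<alpha>] R.i3
      by (simp add: mv_smult R.Av vector_add_ldistrib vector_smult_assoc)
    finally have "(mu * \<alpha>) *s v' = (mu' * \<alpha>) *s v'" using rv2 by (simp add: vector_smult_assoc mult.commute)
    then show "mu = mu'" using v'_nz an by simp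
  qed
qed

end
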